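(* For every integer $n\ge1$, $$\sum_{k=1}^n\frac{\binom{2n}{k}(-1)^k}{k}=-H_{2n}+\frac34\sum_{k=1}^n\frac{\binom{2k}{k}(-1)^k}{k}-\frac14\sum_{k=1}^n\frac{2k\binom{2k}{k}(-1)^k}{(2k-1)^2}.$$
   Context: $H_m=\sum_{j=1}^m1/j$. *)

theory Defs
  imports "HOL-Analysis.Analysis"
begin

end

theory Submission
  imports Defs
begin

definition F :: "nat \<Rightarrow> nat \<Rightarrow> real" where
  "F m j = (\<Sum>k=1..j. real (m choose k) * (-1)^k / real k)"

lemma binom_aux: "real (m choose Suc j) * (1 + real j) = real (m choose j) * (real m - real j)"
proof (cases "j < m")
  case True
  have "(m - j) * (m choose j) = (m choose Suc j) * Suc j"
  proof -
    obtain m' where m: "m = Suc m'" using True by (cases m) auto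
    have "Suc m' * (m' choose j) = (Suc m' choose Suc j) * Suc j" by (rule Suc_times_binomial_eq)
    moreover have "(Suc m' - j) * (Suc m' choose j) = Suc m' * (m' choose j)"
      by (metis binomial_absorb_comp diff_Suc_1)
    ultimately show ?thesis using m by simp
  qed
  then have "real ((m - j) * (m choose j)) = real ((m choose Suc j) * Suc j)" by simp
  then show ?thesis using True by (simp add: of_nat_diff algebra_simps)
next
  case False
  then show ?thesis
    by (cases "j = m") (auto simp: binomial_eq_0)
qed

lemma alg1:
  fixes b c t j m :: real
  assumes "b*(1+j) = c*(m-j)" "j \<ge> 0" "m \<ge> 0"
  shows "c*(-t)/(1+j) + t*c/(m+1) = -t*b/(m+1)"
proof -
  have "1+j \<noteq> 0" "m+1 \<noteq> 0" using assms by auto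
  then show ?thesis using assms(1)
    by (simp add: divide_simps) algebra
qed

lemma F_step: "F (Suc m) j = F m j + ((-1)^j * real (m choose j) - 1) / (real m + 1)"
proof (induction j)
  case 0
  then show ?case by (simp add: F_def)
next
  case (Suc j)
  have A: "F (Suc m) (Suc j) = F (Suc m) j + real (Suc m choose Suc j) * (-1)^Suc j / real (Suc j)"
    by (simp add: F_def)
  have B: "F m (Suc j) = F m j + real (m choose Suc j) * (-1)^Suc j / real (Suc j)"
    by (simp add: F_def)
  have C: "real (m choose j) * (-((-1)^j)) / (1+real j) + (-1)^j * real (m choose j) / (real m + 1)
        = -((-1)^j) * real (m choose Suc j) / (real m + 1)"
    by (rule alg1[OF binom_aux]) auto
  have D: "real (Suc m choose Suc j) = real (m choose Suc j) + real (m choose j)" by simp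
  show ?case
    unfolding A B D Suc
    using C by (simp add: add_divide_distrib diff_divide_distrib ring_distribs)
qed

lemma alg2:
  fixes x y s N F0 F1 :: real
  assumes "x*(N+1) = (2*N+1)*y" "N \<ge> 0" "u = -s"
  shows "(F0 + (s*y - 1)/(2*N+1) + x*(-s)/(N+1) + ((-s)*x - 1)/(2*N+2)) - F0 =
   - 1/(2*N+1) - 1/(2*N+2)
   + 3/4 * ((2*x) * u / (N+1))
   - 1/4 * (2 * (N+1) * (2*x) * u / (2 * (N+1) - 1)^2)"
proof -
  have "N+1 \<noteq> 0" "2*N+1 \<noteq> 0" "2*N+2 \<noteq> 0" using assms by auto
  have y: "y = x*(N+1)/(2*N+1)" using assms by (simp add: field_simps)
  show ?thesis using \<open>N+1 \<noteq> 0\<close> \<open>2*N+1 \<noteq> 0\<close> \<open>2*N+2 \<noteq> 0\<close> unfolding y assms(3)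
    by (simp add: divide_simps power2_eq_square) (simp add: algebra_simps)
qed

lemma F_diff: "F (2*Suc n) (Suc n) - F (2*n) n =
   - 1/(2*real n+1) - 1/(2*real n+2)
   + 3/4 * (real ((2*Suc n) choose Suc n) * (-1)^Suc n / real (Suc n))
   - 1/4 * (2 * real (Suc n) * real ((2*Suc n) choose Suc n) * (-1)^Suc n / (2 * real (Suc n) - 1)^2)"
proof -
  have e1: "F (Suc (Suc (2*n))) (Suc n) = F (Suc (2*n)) (Suc n) + ((-((-1)^n)) * real (Suc (2*n) choose Suc n) - 1)/(2*real n+2)"
    using F_step[of "Suc (2*n)" "Suc n"] by (simp add: add.commute)
  have e2: "F (Suc (2*n)) (Suc n) = F (Suc (2*n)) n + real (Suc (2*n) choose Suc n) * (-((-1)^n)) / (real n + 1)"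
    by (simp add: F_def)
  have e3: "F (Suc (2*n)) n = F (2*n) n + ((-1)^n * real (2*n choose n) - 1)/(2*real n+1)"
    using F_step[of "2*n" n] by simp
  have c1: "real (Suc (Suc (2*n)) choose Suc n) = 2 * real (Suc (2*n) choose Suc n)"
  proof -
    have "Suc (Suc (2*n)) choose Suc n = (Suc (2*n) choose n) + (Suc (2*n) choose Suc n)" by simp
    moreover have "Suc (2*n) choose n = Suc (2*n) choose Suc n"
      using binomial_symmetric[of n "Suc (2*n)"] by simp
    ultimately show ?thesis by simp
  qed
  have c2: "real (Suc (2*n) choose Suc n) * (real n + 1) = (2*real n+1) * real (2*n choose n)"
  proof -
    have "Suc (2*n) * (2*n choose n) = (Suc (2*n) choose Suc n) * Suc n"
      by (rule Suc_times_binomial_eq)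
    then have "real (Suc (2*n) * (2*n choose n)) = real ((Suc (2*n) choose Suc n) * Suc n)" by simp
    then show ?thesis by (simp add: algebra_simps)
  qed
  have s: "2 * Suc n = Suc (Suc (2*n))" by simp
  have r: "real (Suc n) = real n + 1" by simp
  show ?thesis
    unfolding s r c1 e1 e2 e3
    by (rule alg2[OF c2]) simp_all
qed

lemma alg3:
  fixes F1 F0 a b r t A A' B B' H H' :: real
  assumes "F1 - F0 = - 1/a - 1/b + 3/4*r - 1/4*t"
    "A' = A + r" "B' = B + t" "H' = H + 1/a + 1/b"
    "F0 = - H + 3/4*A - 1/4*B"
  shows "F1 = - H' + 3/4*A' - 1/4*B'"
proof -
  have "- 1/a = - (1/a)" "- 1/b = - (1/b)" by simp_all
  then show ?thesis using assms by linarith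
qed

theorem mainTheorem13:
  fixes n :: nat
  assumes "n \<ge> 1"
  shows "(\<Sum>k=1..n. real ((2*n) choose k) * (-1)^k / real k) =
    - harm (2*n)
    + 3/4 * (\<Sum>k=1..n. real ((2*k) choose k) * (-1)^k / real k)
    - 1/4 * (\<Sum>k=1..n. 2 * real k * real ((2*k) choose k) * (-1)^k / (2 * real k - 1)^2)"
proof -
  have "F (2*n) n = - harm (2*n)
    + 3/4 * (\<Sum>k=1..n. real ((2*k) choose k) * (-1)^k / real k)
    - 1/4 * (\<Sum>k=1..n. 2 * real k * real ((2*k) choose k) * (-1)^k / (2 * real k - 1)^2)"
  proof (induction n)
    case 0
    then show ?case by (simp add: F_def harm_def)
  next
    case (Suc n)
    have h: "harm (2 * Suc n) = harm (2*n) + 1/(2*real n+1) + 1/(2*real n+2)"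
    proof -
      have "2 * Suc n = Suc (Suc (2*n))" by simp
      then show ?thesis by (simp add: harm_Suc inverse_eq_divide add_ac)
    qed
    have D: "F (2*Suc n) (Suc n) - F (2*n) n =
   - 1/(2*real n+1) - 1/(2*real n+2)
   + 3/4 * (real ((2*Suc n) choose Suc n) * (-1)^Suc n / real (Suc n))
   - 1/4 * (2 * real (Suc n) * real ((2*Suc n) choose Suc n) * (-1)^Suc n / (2 * real (Suc n) - 1)^2)"
      by (rule F_diff)
    have S1: "(\<Sum>k=1..Suc n. real ((2*k) choose k) * (-1)^k / real k) =
       (\<Sum>k=1..n. real ((2*k) choose k) * (-1)^k / real k) + real ((2*Suc n) choose Suc n) * (-1)^Suc n / real (Suc n)"
      by (subst sum.cl_ivl_Suc) simp
    have S2: "(\<Sum>k=1..Suc n. 2 * real k * real ((2*k) choose k) * (-1)^k / (2 * real k - 1)^2) =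
       (\<Sum>k=1..n. 2 * real k * real ((2*k) choose k) * (-1)^k / (2 * real k - 1)^2) + 2 * real (Suc n) * real ((2*Suc n) choose Suc n) * (-1)^Suc n / (2 * real (Suc n) - 1)^2"
      by (subst sum.cl_ivl_Suc) simp
    show ?case by (rule alg3[OF D S1 S2 h Suc.IH])
  qed
  then show ?thesis by (simp add: F_def)
qed

end
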